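(* For $d\ge0$ let $\Phi_d(x):=\sum_{n\ge1}A_{d,n}x^{n-1}$ and let $\Phi(x):=\sum_{n\ge1}A_nx^{n-1}$. Then for all $x\ge0$, $\Phi_d(x)\to\Phi(x)$ as $d\to\infty$ (in $[0,\infty]$). Moreover, for all $d\ge0$ and $t\in[0,1)$ there exists $A=A(d,t)<\infty$ such that $\Phi_d(x)\le A$ for all $x\in[0,t]$.
   Context: Rooted unlabeled trees: $\mathcal{X}_0=\{\bullet\}$ consists of the trivial tree. For $d\ge1$, an element $t\in\mathcal{X}_d$ is a family $t=\{N_\tau\}_{\tau\in\mathcal{X}_{d-1}}$ of non-negative integers with finite support ($N_\tau$ is the number of children of the root whose subtree is $\tau$). The size is $|\bullet|=1$ and $|t|=1+\sum_\tau N_\tau|\tau|$. $A_{d,n}$ is the number of $t\in\mathcal{X}_d$ with $|t|=n$ (rooted unlabeled trees with $n$ nodes and depth at most $d$), and $A_n$ is the number of rooted unlabeled trees with $n$ nodes (with no depth restriction). *)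

theory Defs
  imports "HOL-Analysis.Analysis" "HOL-Library.Multiset"
begin

text \<open>Rooted unlabeled (unordered) trees: a node together with the multiset of
  the subtrees rooted at its children.  The multiplicity of a tree \<tau> in the
  multiset is the number N_\<tau> of the paper.\<close>
datatype rtree = Node "rtree multiset"

primrec tree_size :: "rtree \<Rightarrow> nat" where
  "tree_size (Node ts) = Suc (sum_mset (image_mset tree_size ts))"

fun in_X :: "nat \<Rightarrow> rtree \<Rightarrow> bool" where
  "in_X 0 (Node ts) = (ts = {#})"
| "in_X (Suc d) (Node ts) = (\<forall>t\<in>#ts. in_X d t)"

definition A_dn :: "nat \<Rightarrow> nat \<Rightarrow> nat" where
  "A_dn d n = card {t. in_X d t \<and> tree_size t = n}"

definition A_n :: "nat \<Rightarrow> nat" where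
  "A_n n = card {t. tree_size t = n}"

text \<open>Generating functions valued in [0,\<infinity>] (ennreal); the summation index k
  corresponds to n = k+1.\<close>
definition Phi_d :: "nat \<Rightarrow> real \<Rightarrow> ennreal" where
  "Phi_d d x = (\<Sum>k. ennreal (real (A_dn d (Suc k)) * x ^ k))"

definition Phi :: "real \<Rightarrow> ennreal" where
  "Phi x = (\<Sum>k. ennreal (real (A_n (Suc k)) * x ^ k))"

end

theory Submission
  imports Defs
begin

lemma size_pos: "tree_size t \<ge> 1"
  by (cases t) simp

lemma child_size_le: "\<tau> \<in># M \<Longrightarrow> tree_size \<tau> \<le> sum_mset (image_mset tree_size M)"
proof -
  assume "\<tau> \<in># M"
  then obtain M' where "M = add_mset \<tau> M'" by (blast dest: multi_member_split)
  then show ?thesis by simp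
qed

lemma size_le_sum: "size M \<le> sum_mset (image_mset tree_size M)"
proof (induction M)
  case empty then show ?case by simp
next
  case (add x M) then show ?case using size_pos[of x] by simp
qed

lemma in_X_Suc: "in_X d t \<Longrightarrow> in_X (Suc d) t"
proof (induction d arbitrary: t)
  case 0 then show ?case by (cases t) auto
next
  case (Suc d) then show ?case by (cases t) auto
qed

lemma in_X_size: "tree_size t \<le> Suc d \<Longrightarrow> in_X d t"
proof (induction d arbitrary: t)
  case 0
  obtain M where t: "t = Node M" by (cases t)
  have "M = {#}"
  proof (rule ccontr)
    assume "M \<noteq> {#}" then obtain x where "x \<in># M" by blast
    then have "tree_size x \<le> sum_mset (image_mset tree_size M)" by (rule child_size_le)
    moreover have "sum_mset (image_mset tree_size M) = 0" using 0 t by simp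
    ultimately show False using size_pos[of x] by linarith
  qed
  then show ?case using t by simp
next
  case (Suc d)
  obtain M where t: "t = Node M" by (cases t)
  have "in_X d x" if "x \<in># M" for x
    using child_size_le[OF that] Suc.prems t by (intro Suc.IH) simp
  then show ?case using t by simp
qed

lemma finite_size_le: "finite {t. tree_size t \<le> n}"
proof (induction n)
  case 0
  have "{t. tree_size t \<le> 0} = {}" using size_pos by (metis (mono_tags, lifting) Collect_empty_eq le_zero_eq not_one_le_zero)
  then show ?case by (metis finite.emptyI)
next
  case (Suc n)
  let ?S = "{t. tree_size t \<le> n}"
  have fin: "finite {M. set_mset M \<subseteq> ?S \<and> size M \<le> n}"
  proof -
    have "{M. set_mset M \<subseteq> ?S \<and> size M \<le> n} = (\<Union>k\<le>n. multisets_of_size ?S k)"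
      by (auto simp: multisets_of_size_def)
    then show ?thesis using Suc by auto
  qed
  have "{t. tree_size t \<le> Suc n} \<subseteq> Node ` {M. set_mset M \<subseteq> ?S \<and> size M \<le> n}"
  proof
    fix t assume "t \<in> {t. tree_size t \<le> Suc n}"
    then obtain M where t: "t = Node M" and le: "sum_mset (image_mset tree_size M) \<le> n"
      by (cases t) auto
    have "set_mset M \<subseteq> ?S" using child_size_le le by force
    moreover have "size M \<le> n" using size_le_sum[of M] le by simp
    ultimately show "t \<in> Node ` {M. set_mset M \<subseteq> ?S \<and> size M \<le> n}" using t by blast
  qed
  then show ?case using fin finite_subset by blast
qed

lemma finite_size_eq: "finite {t. tree_size t = n}"
  by (rule finite_subset[OF _ finite_size_le[of n]]) auto

lemma A_dn_le_A_n: "A_dn d n \<le> A_n n"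
  unfolding A_dn_def A_n_def by (rule card_mono[OF finite_size_eq]) auto

lemma A_dn_mono: "A_dn d n \<le> A_dn (Suc d) n"
  unfolding A_dn_def
  by (rule card_mono) (auto intro: finite_subset[OF _ finite_size_eq] in_X_Suc)

lemma A_dn_eq: "n \<le> Suc d \<Longrightarrow> A_dn d n = A_n n"
  unfolding A_dn_def A_n_def by (rule arg_cong[where f=card]) (auto intro: in_X_size)

lemma part1:
  assumes x: "x \<ge> 0"
  shows "(\<lambda>d. Phi_d d x) \<longlonglongrightarrow> Phi x"
proof -
  define f where "f d k = ennreal (real (A_dn d (Suc k)) * x ^ k)" for d k
  define g where "g k = ennreal (real (A_n (Suc k)) * x ^ k)" for k
  have fmono: "f d k \<le> f (Suc d) k" for d k
    unfolding f_def using A_dn_mono[of d "Suc k"] x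
    by (intro ennreal_leI mult_right_mono) auto
  have fle: "f d k \<le> g k" for d k
    unfolding f_def g_def using A_dn_le_A_n[of d "Suc k"] x
    by (intro ennreal_leI mult_right_mono) auto
  have feq: "k \<le> d \<Longrightarrow> f d k = g k" for d k
    unfolding f_def g_def using A_dn_eq[of "Suc k" d] by simp
  have Phid: "Phi_d d x = (SUP N. \<Sum>k<N. f d k)" for d
    unfolding Phi_d_def f_def by (rule suminf_eq_SUP)
  have Phi: "Phi x = (SUP N. \<Sum>k<N. g k)"
    unfolding Phi_def g_def by (rule suminf_eq_SUP)
  have inc: "incseq (\<lambda>d. Phi_d d x)"
    unfolding incseq_Suc_iff Phid by (auto intro!: SUP_mono sum_mono fmono)
  have "(SUP d. Phi_d d x) = Phi x"
  proof (rule antisym)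
    show "(SUP d. Phi_d d x) \<le> Phi x"
      unfolding Phid Phi by (intro SUP_least SUP_mono) (auto intro!: sum_mono fle)
    show "Phi x \<le> (SUP d. Phi_d d x)"
      unfolding Phi
    proof (rule SUP_least)
      fix N
      have "(\<Sum>k<N. g k) = (\<Sum>k<N. f N k)" using feq by simp
      also have "\<dots> \<le> Phi_d N x" unfolding Phid by (rule SUP_upper) simp
      also have "\<dots> \<le> (SUP d. Phi_d d x)" by (rule SUP_upper) simp
      finally show "(\<Sum>k<N. g k) \<le> (SUP d. Phi_d d x)" .
    qed
  qed
  with LIMSEQ_SUP[OF inc] show ?thesis by simp
qed


fun Cb :: "nat \<Rightarrow> real \<Rightarrow> real" where
  "Cb 0 x = 1"
| "Cb (Suc d) x = exp (x * Cb d x / (1 - x))"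

lemma pow_sum_mset: "(x::real) ^ sum_mset (image_mset h M) = prod_mset (image_mset (\<lambda>\<tau>. x ^ h \<tau>) M)"
  by (induction M) (simp_all add: power_add)

lemma prod_mset_count:
  fixes f :: "'a \<Rightarrow> 'b::comm_monoid_mult"
  assumes "finite G"
  shows "set_mset M \<subseteq> G \<Longrightarrow> prod_mset (image_mset f M) = (\<Prod>\<tau>\<in>G. f \<tau> ^ count M \<tau>)"
proof (induction M)
  case empty then show ?case by simp
next
  case (add a M)
  then have aG: "a \<in> G" and MG: "set_mset M \<subseteq> G" by auto
  have "(\<Prod>\<tau>\<in>G. f \<tau> ^ count (add_mset a M) \<tau>)
      = (\<Prod>\<tau>\<in>G. f \<tau> ^ count M \<tau> * (if \<tau> = a then f \<tau> else 1))"
    by (intro prod.cong) (auto simp: mult.commute)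
  also have "\<dots> = (\<Prod>\<tau>\<in>G. f \<tau> ^ count M \<tau>) * (\<Prod>\<tau>\<in>G. if \<tau> = a then f \<tau> else 1)"
    by (rule prod.distrib)
  also have "\<dots> = (\<Prod>\<tau>\<in>G. f \<tau> ^ count M \<tau>) * f a"
    using aG assms by (simp add: prod.delta)
  finally show ?case using add.IH[OF MG] by (simp add: mult.commute)
qed

lemma geom_bound:
  fixes y x :: real
  assumes "0 \<le> y" "y \<le> x" "x < 1"
  shows "(\<Sum>k\<in>{0..K}. y ^ k) \<le> exp (y / (1 - x))"
proof -
  have y1: "y < 1" using assms by simp
  have "(1 - y) * (\<Sum>k\<in>{0..K}. y ^ k) = 1 - y ^ Suc K"
    using one_diff_power_eq[of y "Suc K"] by (simp add: atLeast0AtMost lessThan_Suc_atMost)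
  also have "\<dots> \<le> 1" using assms by simp
  finally have "(\<Sum>k\<in>{0..K}. y ^ k) \<le> 1 / (1 - y)" using y1 by (simp add: field_simps)
  also have "1 / (1 - y) = 1 + y / (1 - y)" using y1 by (simp add: field_simps)
  also have "y / (1 - y) \<le> y / (1 - x)" using assms by (intro divide_left_mono) auto
  also have "1 + y / (1 - x) \<le> exp (y / (1 - x))" by (rule exp_ge_add_one_self)
  finally show ?thesis by simp
qed

lemma finite_bound:
  assumes x0: "0 \<le> x" and x1: "x < 1"
  shows "finite F \<Longrightarrow> (\<forall>t\<in>F. in_X d t) \<Longrightarrow> (\<Sum>t\<in>F. x ^ (tree_size t - 1)) \<le> Cb d x"
proof (induction d arbitrary: F)
  case 0
  have "F \<subseteq> {Node {#}}"
  proof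
    fix t assume "t \<in> F"
    then have "in_X 0 t" using 0 by auto
    then show "t \<in> {Node {#}}" by (cases t) auto
  qed
  then have "F = {} \<or> F = {Node {#}}" by blast
  then show ?case by auto
next
  case (Suc d F)
  define kids where "kids t = (case t of Node M \<Rightarrow> M)" for t
  define Ms where "Ms = kids ` F"
  define G where "G = (\<Union>M\<in>Ms. set_mset M)"
  define K where "K = (\<Sum>M\<in>Ms. size M)"
  define y where "y t = x ^ tree_size t" for t
  define \<phi> where "\<phi> M = restrict (count M) G" for M
  have kN: "kids (Node M) = M" for M by (simp add: kids_def)
  have finMs: "finite Ms" using Suc.prems by (simp add: Ms_def)
  have finG: "finite G" using finMs by (simp add: G_def)
  have MsG: "set_mset M \<subseteq> G" if "M \<in> Ms" for M using that by (auto simp: G_def)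
  have GX: "in_X d t" if tG: "t \<in> G" for t
  proof -
    obtain s where s: "s \<in> F" "t \<in># kids s" using tG unfolding G_def Ms_def by blast
    then obtain M where "s = Node M" by (cases s)
    then show ?thesis using s Suc.prems by (auto simp: kN)
  qed
  have injk: "inj_on kids F"
  proof (rule inj_onI)
    fix s t assume "kids s = kids t"
    then show "s = t" by (cases s; cases t) (simp add: kN)
  qed
  have injphi: "inj_on \<phi> Ms"
  proof (rule inj_onI)
    fix M M' assume M: "M \<in> Ms" and M': "M' \<in> Ms" and eq: "\<phi> M = \<phi> M'"
    show "M = M'"
    proof (rule multiset_eqI)
      fix a
      show "count M a = count M' a"
      proof (cases "a \<in> G")
        case True
        then show ?thesis using fun_cong[OF eq, of a] by (simp add: \<phi>_def)
      next
        case False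
        then have "a \<notin># M" "a \<notin># M'" using MsG[OF M] MsG[OF M'] by auto
        then show ?thesis by (simp add: not_in_iff)
      qed
    qed
  qed
  have w: "x ^ (tree_size t - 1) = (\<Prod>\<tau>\<in>G. y \<tau> ^ count (kids t) \<tau>)" if "t \<in> F" for t
  proof -
    obtain M where t: "t = Node M" by (cases t)
    have "M \<in> Ms" using that t by (auto simp: Ms_def kN intro: image_eqI[where x=t])
    then have "set_mset M \<subseteq> G" by (rule MsG)
    then show ?thesis
      using t pow_sum_mset[of x tree_size M] prod_mset_count[OF finG, of M "\<lambda>\<tau>. x ^ tree_size \<tau>"]
      by (simp add: kN y_def)
  qed
  have "(\<Sum>t\<in>F. x ^ (tree_size t - 1)) = (\<Sum>t\<in>F. \<Prod>\<tau>\<in>G. y \<tau> ^ count (kids t) \<tau>)"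
    using w by simp
  also have "\<dots> = (\<Sum>M\<in>Ms. \<Prod>\<tau>\<in>G. y \<tau> ^ count M \<tau>)"
    unfolding Ms_def by (rule sum.reindex[OF injk, symmetric, unfolded comp_def])
  also have "\<dots> = (\<Sum>M\<in>Ms. \<Prod>\<tau>\<in>G. y \<tau> ^ \<phi> M \<tau>)"
    by (intro sum.cong prod.cong) (auto simp: \<phi>_def)
  also have "\<dots> = (\<Sum>h\<in>\<phi> ` Ms. \<Prod>\<tau>\<in>G. y \<tau> ^ h \<tau>)"
    by (rule sum.reindex[OF injphi, symmetric, unfolded comp_def])
  also have "\<dots> \<le> (\<Sum>h\<in>PiE G (\<lambda>_. {0..K}). \<Prod>\<tau>\<in>G. y \<tau> ^ h \<tau>)"
  proof (rule sum_mono2)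
    show "finite (PiE G (\<lambda>_. {0..K}))" using finG by (simp add: finite_PiE)
    show "\<phi> ` Ms \<subseteq> PiE G (\<lambda>_. {0..K})"
    proof
      fix h assume "h \<in> \<phi> ` Ms"
      then obtain M where M: "M \<in> Ms" and h: "h = \<phi> M" by blast
      have "count M a \<le> K" for a
      proof -
        have "count M a \<le> size M" by (rule count_le_size)
        also have "size M \<le> K" unfolding K_def using finMs M by (intro member_le_sum) simp_all
        finally show ?thesis .
      qed
      then show "h \<in> PiE G (\<lambda>_. {0..K})" by (auto simp: h \<phi>_def)
    qed
    show "0 \<le> (\<Prod>\<tau>\<in>G. y \<tau> ^ b \<tau>)" for b using x0 by (intro prod_nonneg) (simp add: y_def)
  qed
  also have "\<dots> = (\<Prod>\<tau>\<in>G. \<Sum>k\<in>{0..K}. y \<tau> ^ k)"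
    by (rule prod_sum_PiE[symmetric]) (use finG in auto)
  also have "\<dots> \<le> (\<Prod>\<tau>\<in>G. exp (y \<tau> / (1 - x)))"
  proof (rule prod_mono)
    fix \<tau> assume "\<tau> \<in> G"
    have "y \<tau> \<le> x" unfolding y_def using size_pos[of \<tau>] x0 x1
      by (metis less_eq_real_def power_decreasing power_one_right)
    then show "0 \<le> (\<Sum>k\<in>{0..K}. y \<tau> ^ k) \<and> (\<Sum>k\<in>{0..K}. y \<tau> ^ k) \<le> exp (y \<tau> / (1 - x))"
      using x0 x1 geom_bound[of "y \<tau>" x K] by (auto intro!: sum_nonneg simp: y_def)
  qed
  also have "\<dots> = exp (\<Sum>\<tau>\<in>G. y \<tau> / (1 - x))"
    using finG by (simp add: exp_sum)
  also have "\<dots> \<le> exp (x * Cb d x / (1 - x))"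
  proof -
    have "(\<Sum>\<tau>\<in>G. y \<tau>) = x * (\<Sum>\<tau>\<in>G. x ^ (tree_size \<tau> - 1))"
      unfolding sum_distrib_left
    proof (rule sum.cong)
      fix \<tau> show "y \<tau> = x * x ^ (tree_size \<tau> - 1)"
        using size_pos[of \<tau>] unfolding y_def
        by (metis Suc_diff_1 less_eq_Suc_le power_Suc zero_less_Suc le_less_trans less_numeral_extra(1) One_nat_def)
    qed simp
    also have "\<dots> \<le> x * Cb d x"
      using Suc.IH[OF finG] GX x0 by (intro mult_left_mono) auto
    finally have "(\<Sum>\<tau>\<in>G. y \<tau>) / (1 - x) \<le> x * Cb d x / (1 - x)"
      using x1 by (intro divide_right_mono) auto
    then show ?thesis by (simp add: sum_divide_distrib)
  qed
  finally show ?case by simp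
qed

lemma part2:
  assumes t0: "0 \<le> t" and t1: "t < 1"
  shows "Phi_d d t \<le> ennreal (Cb d t)"
proof -
  have "(\<Sum>k<N. ennreal (real (A_dn d (Suc k)) * t ^ k)) \<le> ennreal (Cb d t)" for N
  proof -
    define S where "S k = {\<tau>. in_X d \<tau> \<and> tree_size \<tau> = Suc k}" for k
    have finS: "finite (S k)" for k
      unfolding S_def by (rule finite_subset[OF _ finite_size_eq[of "Suc k"]]) auto
    have finS': "finite {\<tau>. in_X d \<tau> \<and> tree_size \<tau> = Suc k}" for k
      using finS[of k] by (simp add: S_def)
    have "(\<Sum>k<N. real (A_dn d (Suc k)) * t ^ k) = (\<Sum>k<N. \<Sum>\<tau>\<in>S k. t ^ (tree_size \<tau> - 1))"
      by (intro sum.cong) (auto simp: S_def A_dn_def)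
    also have "\<dots> = (\<Sum>\<tau>\<in>(\<Union>k<N. S k). t ^ (tree_size \<tau> - 1))"
      by (rule sum.UNION_disjoint[symmetric]) (auto simp: finS' S_def)
    also have "\<dots> \<le> Cb d t"
      by (rule finite_bound[OF t0 t1]) (auto simp: finS' S_def)
    finally show ?thesis using t0 by (subst sum_ennreal) (auto intro!: ennreal_leI)
  qed
  then show ?thesis unfolding Phi_d_def suminf_eq_SUP by (intro SUP_least)
qed

lemma Phi_d_mono:
  assumes "0 \<le> x" "x \<le> t"
  shows "Phi_d d x \<le> Phi_d d t"
  unfolding Phi_d_def suminf_eq_SUP
proof (rule SUP_mono)
  fix n
  show "\<exists>m\<in>UNIV. (\<Sum>k<n. ennreal (real (A_dn d (Suc k)) * x ^ k)) \<le> (\<Sum>k<m. ennreal (real (A_dn d (Suc k)) * t ^ k))"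
    using assms by (intro bexI[of _ n] sum_mono ennreal_leI mult_left_mono power_mono) auto
qed

theorem proposition2:
  shows "(\<forall>x::real. x \<ge> 0 \<longrightarrow> (\<lambda>d. Phi_d d x) \<longlonglongrightarrow> Phi x)
    \<and> (\<forall>d::nat. \<forall>t::real. 0 \<le> t \<and> t < 1 \<longrightarrow>
          (\<exists>A::real. \<forall>x\<in>{0..t}. Phi_d d x \<le> ennreal A))"
proof (intro conjI allI impI)
  fix x :: real assume "x \<ge> 0" then show "(\<lambda>d. Phi_d d x) \<longlonglongrightarrow> Phi x" by (rule part1)
next
  fix d :: nat and t :: real assume "0 \<le> t \<and> t < 1"
  then have "\<forall>x\<in>{0..t}. Phi_d d x \<le> ennreal (Cb d t)"
    using part2[of t d] Phi_d_mono[of _ t d] by (meson atLeastAtMost_iff order_trans)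
  then show "\<exists>A::real. \<forall>x\<in>{0..t}. Phi_d d x \<le> ennreal A" by blast
qed

end
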